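(* Let $n\ge 3$ and let $\mathbf{x}$ be a fractional vertex of $P^n_{\mathrm{SEP}}$. Then $|E_{\mathbf{x}}|\ge n+3$.
   Context: $K_n=(V_n,E_n)$ is the complete undirected graph on $n$ nodes; $\delta(S)$ is the set of edges with exactly one endpoint in $S\subseteq V_n$. $P^n_{\mathrm{SEP}}=\{\mathbf{x}\in\mathbb{R}^{E_n} : \sum_{e\in\delta(v)}x_e=2\ \forall v;\ \sum_{e\in\delta(S)}x_e\ge 2\ \forall S \text{ with } 3\le|S|\le n-3;\ 0\le x_e\le 1\}$. A vertex is an extreme point of $P^n_{\mathrm{SEP}}$; it is fractional if it is not integral. $E_{\mathbf{x}}=\{e\in E_n: x_e>0\}$ is the edge set of the support graph of $\mathbf{x}$. *)

theory Defs
  imports "HOL-Analysis.Analysis"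
begin

text \<open>Nodes of K_n are 0..n-1; an edge is a 2-element subset of the node set.
  Vectors in R^{E_n} are represented as functions on sets of nodes that vanish
  outside E_n.\<close>

definition V_n :: "nat \<Rightarrow> nat set" where
  "V_n n = {..<n}"

definition E_n :: "nat \<Rightarrow> nat set set" where
  "E_n n = {e. e \<subseteq> V_n n \<and> card e = 2}"

definition delta :: "nat \<Rightarrow> nat set \<Rightarrow> nat set set" where
  "delta n S = {e \<in> E_n n. card (e \<inter> S) = 1}"

definition P_SEP :: "nat \<Rightarrow> (nat set \<Rightarrow> real) set" where
  "P_SEP n = {x. (\<forall>e. e \<notin> E_n n \<longrightarrow> x e = 0)
     \<and> (\<forall>v \<in> V_n n. (\<Sum>e\<in>delta n {v}. x e) = 2)
     \<and> (\<forall>S. S \<subseteq> V_n n \<and> 3 \<le> card S \<and> card S \<le> n - 3 \<longrightarrow> (\<Sum>e\<in>delta n S. x e) \<ge> 2)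
     \<and> (\<forall>e \<in> E_n n. 0 \<le> x e \<and> x e \<le> 1)}"

definition is_vertex :: "(nat set \<Rightarrow> real) \<Rightarrow> (nat set \<Rightarrow> real) set \<Rightarrow> bool" where
  "is_vertex x P \<longleftrightarrow> x \<in> P \<and>
     \<not> (\<exists>a\<in>P. \<exists>b\<in>P. \<exists>u::real. a \<noteq> b \<and> 0 < u \<and> u < 1 \<and>
            x = (\<lambda>e. (1 - u) * a e + u * b e))"

definition fractional :: "nat \<Rightarrow> (nat set \<Rightarrow> real) \<Rightarrow> bool" where
  "fractional n x \<longleftrightarrow> (\<exists>e \<in> E_n n. x e \<notin> \<int>)"

definition support_edges :: "nat \<Rightarrow> (nat set \<Rightarrow> real) \<Rightarrow> nat set set" where
  "support_edges n x = {e \<in> E_n n. x e > 0}"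

end

theory Submission
  imports Defs
begin

lemma finite_V: "finite (V_n n)" by (simp add: V_n_def)

lemma finite_E: "finite (E_n n)"
proof -
  have "E_n n \<subseteq> Pow (V_n n)" by (auto simp: E_n_def)
  then show ?thesis using finite_V by (meson finite_Pow_iff finite_subset)
qed

lemma delta_single: "delta n {v} = {e\<in>E_n n. v \<in> e}"
proof -
  have "card (e \<inter> {v}) = 1 \<longleftrightarrow> v \<in> e" for e :: "nat set"
    by (cases "v \<in> e") auto
  then show ?thesis by (auto simp: delta_def)
qed

lemma E_card2: "e \<in> E_n n \<Longrightarrow> card e = 2" by (simp add: E_n_def)
lemma E_sub: "e \<in> E_n n \<Longrightarrow> e \<subseteq> V_n n" by (simp add: E_n_def)
lemma E_finite: "e \<in> E_n n \<Longrightarrow> finite e"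
  using E_card2 by (metis card.infinite zero_neq_numeral)

lemma cut_identity:
  fixes y :: "nat set \<Rightarrow> real"
  assumes "S \<subseteq> V_n n"
  shows "(\<Sum>v\<in>S. \<Sum>e\<in>delta n {v}. y e)
       = (\<Sum>e\<in>delta n S. y e) + 2 * (\<Sum>e\<in>{e\<in>E_n n. e \<subseteq> S}. y e)"
proof -
  have fS: "finite S" using assms finite_V finite_subset by blast
  have "(\<Sum>v\<in>S. \<Sum>e\<in>delta n {v}. y e) = (\<Sum>v\<in>S. \<Sum>e\<in>E_n n. if v \<in> e then y e else 0)"
    by (simp add: delta_single sum.inter_filter[OF finite_E])
  also have "\<dots> = (\<Sum>e\<in>E_n n. \<Sum>v\<in>S. if v \<in> e then y e else 0)"
    by (rule sum.swap)
  also have "\<dots> = (\<Sum>e\<in>E_n n. y e * card (e \<inter> S))"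
  proof (rule sum.cong[OF refl])
    fix e assume "e \<in> E_n n"
    have "(\<Sum>v\<in>S. if v \<in> e then y e else 0) = (\<Sum>v\<in>{v\<in>S. v \<in> e}. y e)"
      using sum.inter_filter[OF fS, of "\<lambda>v. y e" "\<lambda>v. v \<in> e"] by simp
    also have "{v\<in>S. v \<in> e} = e \<inter> S" by auto
    finally show "(\<Sum>v\<in>S. if v \<in> e then y e else 0) = y e * card (e \<inter> S)" by simp
  qed
  also have "\<dots> = (\<Sum>e\<in>E_n n. (if card (e \<inter> S) = 1 then y e else 0) + 2 * (if e \<subseteq> S then y e else 0))"
  proof (rule sum.cong[OF refl])
    fix e assume e: "e \<in> E_n n"
    have c2: "card e = 2" and fe: "finite e" using e E_card2 E_finite by auto
    have le: "card (e \<inter> S) \<le> 2" using c2 fe by (metis card_mono inf_le1)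
    have sub: "e \<subseteq> S \<longleftrightarrow> card (e \<inter> S) = 2"
    proof
      assume "e \<subseteq> S" then show "card (e \<inter> S) = 2" using c2 by (simp add: Int_absorb2)
    next
      assume "card (e \<inter> S) = 2"
      then have "e \<inter> S = e" using c2 fe by (metis card_subset_eq inf_le1)
      then show "e \<subseteq> S" by blast
    qed
    show "y e * card (e \<inter> S) = (if card (e \<inter> S) = 1 then y e else 0) + 2 * (if e \<subseteq> S then y e else 0)"
      using le sub by (cases "card (e \<inter> S)") (auto simp: numeral_eq_Suc le_Suc_eq)
  qed
  also have "\<dots> = (\<Sum>e\<in>delta n S. y e) + 2 * (\<Sum>e\<in>{e\<in>E_n n. e \<subseteq> S}. y e)"
    by (simp only: sum.distrib sum_distrib_left[symmetric] delta_def sum.inter_filter[OF finite_E])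
  finally show ?thesis .
qed

lemma lin_ev:
  fixes c b k :: real
  assumes "b \<le> c" "c = b \<Longrightarrow> k = 0"
  shows "eventually (\<lambda>t. b \<le> c + t * k) (at_right 0)"
proof (cases "c = b")
  case True then show ?thesis using assms by simp
next
  case False
  then have "b < c" using assms by simp
  have "((\<lambda>t. c + t * k) \<longlongrightarrow> c + 0 * k) (at_right 0)"
    by (intro tendsto_intros)
  then have "((\<lambda>t. c + t * k) \<longlongrightarrow> c) (at_right 0)" by simp
  from order_tendstoD(1)[OF this \<open>b < c\<close>] show ?thesis
    by (rule eventually_mono) simp
qed

lemma perturb1:
  fixes d :: "nat set \<Rightarrow> real"
  assumes x: "x \<in> P_SEP n"
   and d0: "\<forall>e. e \<notin> E_n n \<longrightarrow> d e = 0"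
   and ddeg: "\<forall>v\<in>V_n n. (\<Sum>e\<in>delta n {v}. d e) = 0"
   and dbd: "\<forall>e\<in>E_n n. d e \<noteq> 0 \<longrightarrow> 0 < x e \<and> x e < 1"
   and dcut: "\<forall>S. S \<subseteq> V_n n \<and> 3 \<le> card S \<and> card S \<le> n-3 \<and> (\<Sum>e\<in>delta n S. x e) = 2 \<longrightarrow> (\<Sum>e\<in>delta n S. d e) = 0"
  shows "eventually (\<lambda>t. (\<lambda>e. x e + t * d e) \<in> P_SEP n) (at_right 0)"
proof -
  define A where "A = {S. S \<subseteq> V_n n \<and> 3 \<le> card S \<and> card S \<le> n - 3}"
  have fA: "finite A" unfolding A_def
    by (rule finite_subset[of _ "Pow (V_n n)"]) (auto simp: finite_V)
  have xP: "\<forall>e. e \<notin> E_n n \<longrightarrow> x e = 0"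
     "\<forall>v \<in> V_n n. (\<Sum>e\<in>delta n {v}. x e) = 2"
     "\<forall>S. S \<subseteq> V_n n \<and> 3 \<le> card S \<and> card S \<le> n - 3 \<longrightarrow> (\<Sum>e\<in>delta n S. x e) \<ge> 2"
     "\<forall>e \<in> E_n n. 0 \<le> x e \<and> x e \<le> 1"
    using x by (auto simp: P_SEP_def)
  have ev1: "eventually (\<lambda>t. \<forall>S\<in>A. 2 \<le> (\<Sum>e\<in>delta n S. x e) + t * (\<Sum>e\<in>delta n S. d e)) (at_right 0)"
  proof (rule eventually_ball_finite[OF fA], rule ballI)
    fix S assume "S \<in> A"
    then show "eventually (\<lambda>t. 2 \<le> (\<Sum>e\<in>delta n S. x e) + t * (\<Sum>e\<in>delta n S. d e)) (at_right 0)"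
      using xP(3) dcut by (intro lin_ev) (auto simp: A_def)
  qed
  have ev2: "eventually (\<lambda>t. \<forall>e\<in>E_n n. 0 \<le> x e + t * d e \<and> -1 \<le> - x e + t * (- d e)) (at_right 0)"
  proof (rule eventually_ball_finite[OF finite_E], rule ballI)
    fix e assume e: "e \<in> E_n n"
    show "eventually (\<lambda>t. 0 \<le> x e + t * d e \<and> -1 \<le> - x e + t * (- d e)) (at_right 0)"
    proof (cases "d e = 0")
      case True then show ?thesis using xP(4) e by simp
    next
      case False
      then have "0 < x e" "x e < 1" using dbd e by auto
      then show ?thesis by (intro eventually_conj lin_ev) auto
    qed
  qed
  show ?thesis
  proof (rule eventually_mono[OF eventually_conj[OF ev1 ev2]])
    fix t assume h: "(\<forall>S\<in>A. 2 \<le> (\<Sum>e\<in>delta n S. x e) + t * (\<Sum>e\<in>delta n S. d e)) \<and>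
      (\<forall>e\<in>E_n n. 0 \<le> x e + t * d e \<and> -1 \<le> - x e + t * (- d e))"
    show "(\<lambda>e. x e + t * d e) \<in> P_SEP n"
      unfolding P_SEP_def using h xP d0 ddeg
      by (auto simp: sum.distrib sum_distrib_left[symmetric] A_def)
  qed
qed

lemma perturb:
  fixes d :: "nat set \<Rightarrow> real"
  assumes x: "x \<in> P_SEP n"
   and d0: "\<forall>e. e \<notin> E_n n \<longrightarrow> d e = 0"
   and ddeg: "\<forall>v\<in>V_n n. (\<Sum>e\<in>delta n {v}. d e) = 0"
   and dbd: "\<forall>e\<in>E_n n. d e \<noteq> 0 \<longrightarrow> 0 < x e \<and> x e < 1"
   and dcut: "\<forall>S. S \<subseteq> V_n n \<and> 3 \<le> card S \<and> card S \<le> n-3 \<and> (\<Sum>e\<in>delta n S. x e) = 2 \<longrightarrow> (\<Sum>e\<in>delta n S. d e) = 0"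
   and nz: "d e0 \<noteq> 0"
  shows "\<not> is_vertex x (P_SEP n)"
proof -
  have e1: "eventually (\<lambda>t. (\<lambda>e. x e + t * d e) \<in> P_SEP n) (at_right 0)"
    by (rule perturb1[OF assms(1-5)])
  have e2: "eventually (\<lambda>t. (\<lambda>e. x e + t * (- d e)) \<in> P_SEP n) (at_right 0)"
    by (rule perturb1[OF x]) (use d0 ddeg dbd dcut in \<open>auto simp: sum_negf\<close>)
  from eventually_happens'[OF _ eventually_conj[OF eventually_at_right_less eventually_conj[OF e1 e2]]]
  obtain t :: real where t: "0 < t" "(\<lambda>e. x e + t * d e) \<in> P_SEP n" "(\<lambda>e. x e + t * (- d e)) \<in> P_SEP n"
    by auto
  let ?a = "\<lambda>e. x e + t * (- d e)" and ?b = "\<lambda>e. x e + t * d e"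
  have "?a \<noteq> ?b"
  proof
    assume "?a = ?b" then have "?a e0 = ?b e0" by meson
    then show False using nz t(1) by simp
  qed
  moreover have "x = (\<lambda>e. (1 - 1/2) * ?a e + (1/2) * ?b e)" by (auto simp: algebra_simps)
  ultimately show ?thesis unfolding is_vertex_def using t
    by (metis (no_types, lifting) field_sum_of_halves half_gt_zero less_add_same_cancel1 zero_less_one)
qed

lemma frac_not_int: "0 < (z::real) \<Longrightarrow> z < 1 \<Longrightarrow> z \<notin> \<int>"
  by (auto elim!: Ints_cases)

lemma pair_in_E: "a \<in> V_n n \<Longrightarrow> b \<in> V_n n \<Longrightarrow> a \<noteq> b \<Longrightarrow> {a,b} \<in> E_n n"
  by (auto simp: E_n_def)

lemma pair_delta: "{a,b} \<in> E_n n \<Longrightarrow> a \<noteq> b \<Longrightarrow> ({a,b} \<in> delta n S) = ((a\<in>S) \<noteq> (b\<in>S))"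
  by (cases "a \<in> S"; cases "b \<in> S") (auto simp: delta_def Int_insert_left)

lemma tight_pair_contra:
  fixes x :: "nat set \<Rightarrow> real"
  assumes x: "x \<in> P_SEP n" and S: "S \<subseteq> V_n n" and tight: "(\<Sum>e\<in>delta n S. x e) = 2"
    and pq: "{p,q} \<in> E_n n" "{p,q} \<subseteq> S" "0 < x {p,q}" "x {p,q} < 1"
    and only: "\<forall>e\<in>E_n n. 0 < x e \<and> x e < 1 \<and> e \<subseteq> S \<longrightarrow> e = {p,q}"
  shows False
proof -
  have xP: "\<forall>v \<in> V_n n. (\<Sum>e\<in>delta n {v}. x e) = 2"
     "\<forall>e \<in> E_n n. 0 \<le> x e \<and> x e \<le> 1"
    using x by (auto simp: P_SEP_def)
  define ES where "ES = {e\<in>E_n n. e \<subseteq> S}"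
  have fES: "finite ES" unfolding ES_def using finite_E by simp
  have "(\<Sum>v\<in>S. \<Sum>e\<in>delta n {v}. x e) = (\<Sum>v\<in>S. 2)"
    using xP(1) S by (intro sum.cong) auto
  then have "2 * real (card S) = 2 + 2 * (\<Sum>e\<in>ES. x e)"
    using cut_identity[OF S, of x] tight by (simp add: ES_def)
  then have sumES: "(\<Sum>e\<in>ES. x e) = real (card S) - 1" by simp
  have inES: "{p,q} \<in> ES" using pq by (simp add: ES_def)
  have "(\<Sum>e\<in>ES. x e) = x {p,q} + (\<Sum>e\<in>ES - {{p,q}}. x e)"
    using sum.remove[OF fES inES] by simp
  moreover have "(\<Sum>e\<in>ES - {{p,q}}. x e) \<in> \<int>"
  proof (rule Ints_sum)
    fix e assume e: "e \<in> ES - {{p,q}}"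
    then have "e \<in> E_n n" "e \<subseteq> S" "e \<noteq> {p,q}" by (auto simp: ES_def)
    then have "\<not> (0 < x e \<and> x e < 1)" using only by blast
    moreover have "0 \<le> x e \<and> x e \<le> 1" using xP(2) \<open>e \<in> E_n n\<close> by blast
    ultimately have "x e = 0 \<or> x e = 1" by linarith
    then show "x e \<in> \<int>" by auto
  qed
  ultimately have "x {p,q} = (real (card S) - 1) - (\<Sum>e\<in>ES - {{p,q}}. x e)"
    using sumES by simp
  also have "\<dots> \<in> \<int>" using \<open>(\<Sum>e\<in>ES - {{p,q}}. x e) \<in> \<int>\<close>
    by (intro Ints_diff) auto
  finally show False using frac_not_int pq by blast
qed

lemma cycle_not_vertex:
  fixes x :: "nat set \<Rightarrow> real"
  assumes x: "x \<in> P_SEP n"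
    and V: "a \<in> V_n n" "b \<in> V_n n" "c \<in> V_n n" "d \<in> V_n n"
    and dist: "a \<noteq> b" "a \<noteq> c" "a \<noteq> d" "b \<noteq> c" "b \<noteq> d" "c \<noteq> d"
    and frac: "\<forall>e\<in>{{a,b},{b,c},{c,d},{d,a}}. 0 < x e \<and> x e < 1"
    and Fsub: "\<forall>e\<in>E_n n. 0 < x e \<and> x e < 1 \<longrightarrow> e \<subseteq> {a,b,c,d}"
  shows "\<not> is_vertex x (P_SEP n)"
proof -
  define g :: "nat set \<Rightarrow> real" where "g e = (if e = {a,b} then 1 else 0) - (if e = {b,c} then 1 else 0)
     + (if e = {c,d} then 1 else 0) - (if e = {d,a} then 1 else 0)" for e
  have E: "{a,b} \<in> E_n n" "{b,c} \<in> E_n n" "{c,d} \<in> E_n n" "{d,a} \<in> E_n n"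
    using V dist by (auto intro!: pair_in_E)
  have fd: "finite (delta n S)" for S
    using finite_E by (rule finite_subset[rotated]) (auto simp: delta_def)
  have gsum: "(\<Sum>e\<in>delta n S. g e) = (if (a\<in>S) \<noteq> (b\<in>S) then 1 else 0) - (if (b\<in>S) \<noteq> (c\<in>S) then 1 else 0)
     + (if (c\<in>S) \<noteq> (d\<in>S) then 1 else 0) - (if (d\<in>S) \<noteq> (a\<in>S) then 1 else 0)" for S
    unfolding g_def using pair_delta[OF E(1) dist(1)] pair_delta[OF E(2) dist(4)] pair_delta[OF E(3) dist(6)]
      pair_delta[OF E(4) dist(3)[symmetric]]
    by (simp add: sum.distrib sum_subtractf fd)
  have g0: "\<forall>e. e \<notin> E_n n \<longrightarrow> g e = 0" using E by (auto simp: g_def)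
  have gdeg: "\<forall>v\<in>V_n n. (\<Sum>e\<in>delta n {v}. g e) = 0"
    using dist by (auto simp: gsum)
  have gbd: "\<forall>e\<in>E_n n. g e \<noteq> 0 \<longrightarrow> 0 < x e \<and> x e < 1"
    using frac by (auto simp: g_def split: if_splits)
  have gab: "g {a,b} = 1" using dist by (auto simp: g_def doubleton_eq_iff)
  have gcut: "\<forall>S. S \<subseteq> V_n n \<and> 3 \<le> card S \<and> card S \<le> n-3 \<and> (\<Sum>e\<in>delta n S. x e) = 2 \<longrightarrow> (\<Sum>e\<in>delta n S. g e) = 0"
  proof (intro allI impI)
    fix S assume h: "S \<subseteq> V_n n \<and> 3 \<le> card S \<and> card S \<le> n-3 \<and> (\<Sum>e\<in>delta n S. x e) = 2"
    have key: False if "p \<in> {a,b,c,d}" "q \<in> {a,b,c,d}" "{p,q} \<in> {{a,b},{b,c},{c,d},{d,a}}"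
      "p \<in> S" "q \<in> S" "p \<noteq> q" "\<forall>r\<in>{a,b,c,d}. r \<in> S \<longrightarrow> r = p \<or> r = q" for p q
    proof (rule tight_pair_contra[OF x _ _ , of S p q])
      show "S \<subseteq> V_n n" "(\<Sum>e\<in>delta n S. x e) = 2" using h by auto
      show "{p,q} \<in> E_n n" using that(3) E by (metis empty_iff insertE)
      show "{p,q} \<subseteq> S" using that by auto
      show "0 < x {p,q}" "x {p,q} < 1" using that(3) frac by blast+
      show "\<forall>e\<in>E_n n. 0 < x e \<and> x e < 1 \<and> e \<subseteq> S \<longrightarrow> e = {p,q}"
      proof (intro ballI impI)
        fix e assume e: "e \<in> E_n n" "0 < x e \<and> x e < 1 \<and> e \<subseteq> S"
        then have "e \<subseteq> {a,b,c,d}" using Fsub by blast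
        then have sub: "e \<subseteq> {p,q}" using e that(7) by blast
        have "card {p,q} = 2" using that(6) by simp
        moreover have "card e = 2" using e E_card2 by blast
        ultimately show "e = {p,q}" using sub by (metis card_subset_eq finite.emptyI finite.insertI)
      qed
    qed
    show "(\<Sum>e\<in>delta n S. g e) = 0"
    proof (rule ccontr)
      assume ne: "(\<Sum>e\<in>delta n S. g e) \<noteq> 0"
      have k1: "\<not>(a\<in>S \<and> b\<in>S \<and> c\<notin>S \<and> d\<notin>S)"
        by (intro notI, rule key[of a b]) (use dist in blast)+
      have k2: "\<not>(b\<in>S \<and> c\<in>S \<and> a\<notin>S \<and> d\<notin>S)"
        by (intro notI, rule key[of b c]) (use dist in blast)+
      have k3: "\<not>(c\<in>S \<and> d\<in>S \<and> a\<notin>S \<and> b\<notin>S)"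
        by (intro notI, rule key[of c d]) (use dist in blast)+
      have k4: "\<not>(d\<in>S \<and> a\<in>S \<and> b\<notin>S \<and> c\<notin>S)"
        by (intro notI, rule key[of d a]) (use dist in blast)+
      show False using ne k1 k2 k3 k4 unfolding gsum
        by (cases "a \<in> S"; cases "b \<in> S"; cases "c \<in> S"; cases "d \<in> S") simp_all
    qed
  qed
  show ?thesis by (rule perturb[OF x g0 gdeg gbd gcut, of "{a,b}"]) (simp add: gab)
qed

lemma delta_finite: "finite (delta n S)"
  using finite_E by (rule finite_subset[rotated]) (auto simp: delta_def)

lemma vertex_local:
  fixes x :: "nat set \<Rightarrow> real"
  assumes x: "x \<in> P_SEP n" and v: "v \<in> V_n n"
    and DF: "DF = {e\<in>delta n {v}. 0 < x e \<and> x e < 1}"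
    and DO: "DO = {e\<in>delta n {v}. x e = 1}"
  shows "card {e\<in>delta n {v}. 0 < x e} = card DF + card DO"
    and "(\<Sum>e\<in>DF. x e) + real (card DO) = 2"
proof -
  have xP: "(\<Sum>e\<in>delta n {v}. x e) = 2" "\<forall>e \<in> E_n n. 0 \<le> x e \<and> x e \<le> 1"
    using x v by (auto simp: P_SEP_def)
  have dE: "delta n {v} \<subseteq> E_n n" by (auto simp: delta_def)
  have eq: "{e\<in>delta n {v}. 0 < x e} = DF \<union> DO" using xP(2) dE DF DO by force
  have disj: "DF \<inter> DO = {}" using DF DO by auto
  have fin: "finite DF" "finite DO" using DF DO delta_finite by auto
  show "card {e\<in>delta n {v}. 0 < x e} = card DF + card DO"
    using eq disj fin card_Un_disjoint by metis
  have "(\<Sum>e\<in>delta n {v}. x e) = (\<Sum>e\<in>{e\<in>delta n {v}. 0 < x e}. x e)"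
  proof (rule sum.mono_neutral_right[OF delta_finite])
    show "{e\<in>delta n {v}. 0 < x e} \<subseteq> delta n {v}" by auto
    show "\<forall>i\<in>delta n {v} - {e\<in>delta n {v}. 0 < x e}. x i = 0"
      using xP(2) dE by force
  qed
  also have "\<dots> = (\<Sum>e\<in>DF. x e) + (\<Sum>e\<in>DO. x e)"
    unfolding eq using fin disj by (rule sum.union_disjoint[OF _ _ ]) 
  also have "(\<Sum>e\<in>DO. x e) = real (card DO)" using DO by simp
  finally show "(\<Sum>e\<in>DF. x e) + real (card DO) = 2" using xP(1) by simp
qed

lemma vertex_W:
  fixes x :: "nat set \<Rightarrow> real"
  assumes x: "x \<in> P_SEP n" and v: "v \<in> V_n n"
    and DF: "DF = {e\<in>delta n {v}. 0 < x e \<and> x e < 1}"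
    and DO: "DO = {e\<in>delta n {v}. x e = 1}"
    and ne: "DF \<noteq> {}"
  shows "card DO \<le> 1" "card DF \<ge> 2" "card {e\<in>delta n {v}. 0 < x e} \<ge> 3"
proof -
  note L = vertex_local[OF x v DF DO]
  have fin: "finite DF" using DF delta_finite by auto
  have pos: "(\<Sum>e\<in>DF. x e) > 0" using fin ne DF by (intro sum_pos) auto
  have "(\<Sum>e\<in>DF. x e) < (\<Sum>e\<in>DF. 1)" using fin ne DF by (intro sum_strict_mono) auto
  then have lt: "(\<Sum>e\<in>DF. x e) < real (card DF)" by simp
  show c1: "card DO \<le> 1"
  proof (rule ccontr)
    assume "\<not> card DO \<le> 1" then have "real (card DO) \<ge> 2" by simp
    then show False using L(2) pos by linarith
  qed
  show "card DF \<ge> 2"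
  proof (rule ccontr)
    assume "\<not> card DF \<ge> 2"
    then have "card DF \<le> 1" by simp
    then have "real (card DF) \<le> 1" by simp
    moreover have "real (card DO) \<le> 1" using c1 by simp
    ultimately show False using L(2) lt by linarith
  qed
  have "real (card DF) + real (card DO) > 2" using L(2) lt by linarith
  then have "card DF + card DO > 2" by linarith
  then show "card {e\<in>delta n {v}. 0 < x e} \<ge> 3" using L(1) by simp
qed

lemma vertex_notW:
  fixes x :: "nat set \<Rightarrow> real"
  assumes x: "x \<in> P_SEP n" and v: "v \<in> V_n n"
    and e: "{e\<in>delta n {v}. 0 < x e \<and> x e < 1} = {}"
  shows "card {e\<in>delta n {v}. 0 < x e} = 2"
proof -
  note L = vertex_local[OF x v refl refl]
  from L(2) e have "real (card {e\<in>delta n {v}. x e = 1}) = 2" by simp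
  then show ?thesis using L(1) e by simp
qed

lemma degree_sum:
  fixes x :: "nat set \<Rightarrow> real"
  shows "(\<Sum>v\<in>V_n n. card {e\<in>delta n {v}. 0 < x e}) = 2 * card (support_edges n x)"
proof -
  define y :: "nat set \<Rightarrow> real" where "y e = (if 0 < x e then 1 else 0)" for e
  have d0: "delta n (V_n n) = {}"
  proof -
    have "card (e \<inter> V_n n) = 2" if "e \<in> E_n n" for e
      using that E_sub E_card2 by (metis Int_absorb2)
    then show ?thesis by (auto simp: delta_def)
  qed
  have EV: "{e\<in>E_n n. e \<subseteq> V_n n} = E_n n" using E_sub by blast
  have "(\<Sum>v\<in>V_n n. \<Sum>e\<in>delta n {v}. y e) = 2 * (\<Sum>e\<in>E_n n. y e)"
    using cut_identity[of "V_n n" n y] d0 EV by simp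
  moreover have "(\<Sum>e\<in>delta n {v}. y e) = real (card {e\<in>delta n {v}. 0 < x e})" for v
    unfolding y_def using sum.inter_filter[OF delta_finite[of n "{v}"], of "\<lambda>_. (1::real)" "\<lambda>e. 0 < x e"]
    by simp
  moreover have "(\<Sum>e\<in>E_n n. y e) = real (card (support_edges n x))"
    unfolding y_def support_edges_def using sum.inter_filter[OF finite_E[of n], of "\<lambda>_. (1::real)" "\<lambda>e. 0 < x e"]
    by simp
  ultimately have "real (\<Sum>v\<in>V_n n. card {e\<in>delta n {v}. 0 < x e}) = real (2 * card (support_edges n x))"
    by simp
  then show ?thesis by (simp only: of_nat_eq_iff)
qed

lemma four_cycle_bool:
  assumes "ab \<or> ac" "ab \<or> ad" "ac \<or> ad"
    "ab \<or> bc" "ab \<or> bd" "bc \<or> bd"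
    "ac \<or> bc" "ac \<or> cd" "bc \<or> cd"
    "ad \<or> bd" "ad \<or> cd" "bd \<or> cd"
  shows "(ab \<and> bc \<and> cd \<and> ad) \<or> (ab \<and> bd \<and> cd \<and> ac) \<or> (ac \<and> bc \<and> bd \<and> ad)"
  using assms by blast

lemma pair_of_card2: "card e = 2 \<Longrightarrow> v \<in> e \<Longrightarrow> \<exists>u. u \<noteq> v \<and> e = {v,u}"
  by (auto simp: card_2_iff)

theorem mainTheorem2:
  fixes n :: nat and x :: "nat set \<Rightarrow> real"
  assumes "n \<ge> 3"
    and "is_vertex x (P_SEP n)"
    and "fractional n x"
  shows "card (support_edges n x) \<ge> n + 3"
proof (rule ccontr)
  assume "\<not> ?thesis"
  then have m: "card (support_edges n x) \<le> n + 2" by simp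
  have x: "x \<in> P_SEP n" using assms(2) by (simp add: is_vertex_def)
  have xb: "\<forall>e\<in>E_n n. 0 \<le> x e \<and> x e \<le> 1" using x by (simp add: P_SEP_def)
  define F where "F = {e\<in>E_n n. 0 < x e \<and> x e < 1}"
  define W where "W = {v\<in>V_n n. \<exists>e\<in>F. v \<in> e}"
  define Dg where "Dg v = card {e\<in>delta n {v}. 0 < x e}" for v
  define DF where "DF v = {e\<in>delta n {v}. 0 < x e \<and> x e < 1}" for v
  define DO where "DO v = {e\<in>delta n {v}. x e = 1}" for v
  have WV: "W \<subseteq> V_n n" by (auto simp: W_def)
  have fW: "finite W" using WV finite_V finite_subset by blast
  have DFeq: "DF v = {e\<in>F. v \<in> e}" for v by (auto simp: DF_def F_def delta_single)
  have DFne: "DF v \<noteq> {}" if "v \<in> W" for v using that by (auto simp: DFeq W_def)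
  have DFe: "DF v = {}" if "v \<in> V_n n" "v \<notin> W" for v using that by (auto simp: DFeq W_def)
  have Wprops: "Dg v \<ge> 3 \<and> card (DF v) \<ge> 2 \<and> card (DO v) \<le> 1 \<and> Dg v = card (DF v) + card (DO v)"
    if "v \<in> W" for v
    using vertex_W[OF x _ DF_def DO_def DFne[OF that]] vertex_local(1)[OF x _ DF_def DO_def] that WV
    unfolding Dg_def by auto
  have notW: "Dg v = 2" if "v \<in> V_n n - W" for v
    using vertex_notW[of x n v] x that DFe unfolding Dg_def DF_def by auto
  have sumV: "(\<Sum>v\<in>V_n n. Dg v) = 2 * card (support_edges n x)"
    unfolding Dg_def by (rule degree_sum)
  have cV: "card (V_n n) = n" by (simp add: V_n_def)
  have "(\<Sum>v\<in>V_n n. Dg v) = (\<Sum>v\<in>W. Dg v) + (\<Sum>v\<in>V_n n - W. Dg v)"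
    using sum.subset_diff[OF WV finite_V] by (simp add: add.commute)
  also have "(\<Sum>v\<in>V_n n - W. Dg v) = 2 * (n - card W)"
    using notW card_Diff_subset[OF fW WV] cV by simp
  finally have sumW: "(\<Sum>v\<in>W. Dg v) + 2 * (n - card W) = 2 * card (support_edges n x)"
    using sumV by simp
  have "(\<Sum>v\<in>W. 3) \<le> (\<Sum>v\<in>W. Dg v)" using Wprops by (intro sum_mono) blast
  then have sumW3: "3 * card W \<le> (\<Sum>v\<in>W. Dg v)" by simp
  have cWn: "card W \<le> n" using card_mono[OF finite_V WV] cV by simp
  have W4: "card W \<le> 4" using sumW sumW3 cWn m by linarith
  define N where "N v = {u. u \<in> W \<and> u \<noteq> v \<and> {v,u} \<in> F}" for v
  have DFsub: "DF v \<subseteq> (\<lambda>u. {v,u}) ` N v" for v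
  proof
    fix e assume e: "e \<in> DF v"
    then have eF: "e \<in> F" "v \<in> e" by (auto simp: DFeq)
    then have eE: "e \<in> E_n n" by (simp add: F_def)
    obtain u where u: "u \<noteq> v" "e = {v,u}" using pair_of_card2[OF E_card2[OF eE] eF(2)] by blast
    have "u \<in> V_n n" using E_sub[OF eE] u by auto
    then have "u \<in> W" using eF u by (auto simp: W_def)
    then show "e \<in> (\<lambda>u. {v,u}) ` N v" using u eF by (auto simp: N_def)
  qed
  have NW: "N v \<subseteq> W - {v}" for v by (auto simp: N_def)
  have cardDF: "card (DF v) \<le> card (N v)" for v
  proof -
    have "finite (N v)" using NW fW finite_subset by (metis finite_Diff)
    then show ?thesis using DFsub card_mono card_image_le
      by (metis (no_types, lifting) finite_imageI le_trans)
  qed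
  have cN: "card (N v) \<le> card W - 1" if "v \<in> W" for v
    using card_mono[OF _ NW[of v]] fW that by (simp add: card_Diff_singleton)
  obtain e0 where e0: "e0 \<in> E_n n" "x e0 \<notin> \<int>" using assms(3) by (auto simp: fractional_def)
  have "x e0 \<noteq> 0" "x e0 \<noteq> 1" using e0(2) by auto
  then have e0F: "e0 \<in> F" using xb e0(1) by (force simp: F_def)
  obtain p q where pq: "e0 = {p,q}" "p \<noteq> q" using E_card2[OF e0(1)] by (auto simp: card_2_iff)
  have pW: "p \<in> W" using e0F pq E_sub[OF e0(1)] by (auto simp: W_def)
  have "2 \<le> card W - 1" using Wprops[OF pW] cardDF[of p] cN[OF pW] by linarith
  then have W3: "card W \<ge> 3" by simp
  show False
  proof (cases "card W = 3")
    case True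
    have "Dg v = 3" if "v \<in> W" for v
      using Wprops[OF that] cardDF[of v] cN[OF that] True by linarith
    then have "(\<Sum>v\<in>W. Dg v) = 9" using True by simp
    then show False using sumW True by presburger
  next
    case False
    then have c4: "card W = 4" using W3 W4 by simp
    obtain a where aW: "a \<in> W" using W3 by fastforce
    have "card (W - {a}) = 3" using c4 aW fW by (simp add: card_Diff_singleton)
    then obtain b c d where bcd: "W - {a} = {b,c,d}" "b \<noteq> c" "c \<noteq> d" "b \<noteq> d"
      by (auto simp: card_3_iff)
    have Weq: "W = {a,b,c,d}" using bcd aW by auto
    have dist: "a \<noteq> b" "a \<noteq> c" "a \<noteq> d" using bcd by auto
    have two: "{v,u1} \<in> F \<or> {v,u2} \<in> F"
      if "v \<in> W" "u1 \<in> W" "u2 \<in> W" "u1 \<noteq> v" "u2 \<noteq> v" "u1 \<noteq> u2" for v u1 u2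
    proof (rule ccontr)
      assume "\<not> ?thesis"
      then have "N v \<subseteq> W - {v,u1,u2}" by (auto simp: N_def)
      moreover have "card (W - {v,u1,u2}) = 1"
        using that c4 fW by (simp add: card_Diff_subset)
      ultimately have "card (N v) \<le> 1" using fW
        by (metis card_mono finite_Diff)
      then show False using Wprops[OF that(1)] cardDF[of v] by linarith
    qed
    have sym: "{b,a} = {a,b}" "{c,a} = {a,c}" "{d,a} = {a,d}" "{c,b} = {b,c}" "{d,b} = {b,d}" "{d,c} = {c,d}"
      by auto
    have inW: "a \<in> W" "b \<in> W" "c \<in> W" "d \<in> W" using Weq by auto
    note T = two[OF inW(1) inW(2) inW(3)] two[OF inW(1) inW(2) inW(4)] two[OF inW(1) inW(3) inW(4)]
      two[OF inW(2) inW(1) inW(3)] two[OF inW(2) inW(1) inW(4)] two[OF inW(2) inW(3) inW(4)]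
      two[OF inW(3) inW(1) inW(2)] two[OF inW(3) inW(1) inW(4)] two[OF inW(3) inW(2) inW(4)]
      two[OF inW(4) inW(1) inW(2)] two[OF inW(4) inW(1) inW(3)] two[OF inW(4) inW(2) inW(3)]
    have cyc: False if "{p1,p2,p3,p4} = W" "p1 \<noteq> p2" "p1 \<noteq> p3" "p1 \<noteq> p4" "p2 \<noteq> p3" "p2 \<noteq> p4" "p3 \<noteq> p4"
      "{p1,p2} \<in> F" "{p2,p3} \<in> F" "{p3,p4} \<in> F" "{p4,p1} \<in> F" for p1 p2 p3 p4
    proof -
      have V: "p1 \<in> V_n n" "p2 \<in> V_n n" "p3 \<in> V_n n" "p4 \<in> V_n n" using that(1) WV by auto
      have fr: "\<forall>e\<in>{{p1,p2},{p2,p3},{p3,p4},{p4,p1}}. 0 < x e \<and> x e < 1"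
        using that(8-11) by (simp add: F_def)
      have Fs: "\<forall>e\<in>E_n n. 0 < x e \<and> x e < 1 \<longrightarrow> e \<subseteq> {p1,p2,p3,p4}"
      proof (intro ballI impI)
        fix e assume "e \<in> E_n n" "0 < x e \<and> x e < 1"
        then have "e \<in> F" "e \<subseteq> V_n n" using E_sub by (auto simp: F_def)
        then show "e \<subseteq> {p1,p2,p3,p4}" unfolding that(1) W_def by auto
      qed
      show False using cycle_not_vertex[OF x V that(2-7) fr Fs] assms(2) by simp
    qed
    have B: "({a,b}\<in>F \<and> {b,c}\<in>F \<and> {c,d}\<in>F \<and> {a,d}\<in>F) \<or> ({a,b}\<in>F \<and> {b,d}\<in>F \<and> {c,d}\<in>F \<and> {a,c}\<in>F)
       \<or> ({a,c}\<in>F \<and> {b,c}\<in>F \<and> {b,d}\<in>F \<and> {a,d}\<in>F)"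
      by (rule four_cycle_bool) (use T dist bcd in \<open>simp_all only: sym simp_thms\<close>)
    show False
    proof -
      { assume h: "{a,b}\<in>F \<and> {b,c}\<in>F \<and> {c,d}\<in>F \<and> {a,d}\<in>F"
        have False by (rule cyc[of a b c d]) (use h Weq dist bcd sym in auto) }
      moreover
      { assume h: "{a,b}\<in>F \<and> {b,d}\<in>F \<and> {c,d}\<in>F \<and> {a,c}\<in>F"
        have False by (rule cyc[of a b d c]) (use h Weq dist bcd sym in auto) }
      moreover
      { assume h: "{a,c}\<in>F \<and> {b,c}\<in>F \<and> {b,d}\<in>F \<and> {a,d}\<in>F"
        have False by (rule cyc[of a c b d]) (use h Weq dist bcd sym in auto) }
      ultimately show False using B by blast
    qed
  qed
qed

end
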